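(* Let $G$ be a smallest counterexample to the statement "every $n$-vertex triangulation has an independent dominating set of size at most $n/3$" (i.e., $G$ is a triangulation on $n$ vertices with no independent dominating set of size at most $n/3$, and every triangulation with fewer vertices has an independent dominating set of size at most one third of its number of vertices). Let $\psi$ be a partial proper $4$-coloring of $G$ such that every uncolored vertex has degree exactly four, $|\psi[v]|\ge 3$ for every vertex $v$, and $|\psi[v]|=4$ for every vertex $v$ of degree at most five. Then every bad edge of $G$ is part of two critical cycles.
   Context: Graphs are finite, undirected and simple. A triangulation is a planar graph embedded in the plane such that every face, including the outer face, is bounded by a cycle on three edges. A set $S\subseteq V(G)$ is an independent dominating set if no two vertices of $S$ are adjacent and every vertex not in $S$ has a neighbor in $S$. A partial proper $4$-coloring assigns to some vertices colors from $\{1,2,3,4\}$ with adjacent colored vertices receiving distinct colors. $\psi[v]$ is the set of colors used by $\psi$ on the closed neighborhood $N[v]$. For $i\in\{1,2,3,4\}$, $C_i$ is the set of vertices of color $i$, and $U_i$ is the set of vertices of $G$ not in $C_i$ and having no neighbor in $C_i$. A bad edge is an edge between $U_i$ and $U_j$ for some $i\neq j$. A critical cycle is the $4$-cycle formed by the neighbors of an uncolored vertex (the cycle around that vertex in the triangulation). *)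

theory Defs
  imports "HOL-Analysis.Analysis"
begin

definition simple_graph :: "'a set \<Rightarrow> ('a \<Rightarrow> 'a \<Rightarrow> bool) \<Rightarrow> bool" where
  "simple_graph V E \<longleftrightarrow> finite V \<and>
     (\<forall>u v. E u v \<longrightarrow> u \<in> V \<and> v \<in> V \<and> u \<noteq> v \<and> E v u)"

definition degree :: "'a set \<Rightarrow> ('a \<Rightarrow> 'a \<Rightarrow> bool) \<Rightarrow> 'a \<Rightarrow> nat" where
  "degree V E v = card {w \<in> V. E v w}"

definition independent_dominating_set :: "'a set \<Rightarrow> ('a \<Rightarrow> 'a \<Rightarrow> bool) \<Rightarrow> 'a set \<Rightarrow> bool" where
  "independent_dominating_set V E S \<longleftrightarrow> S \<subseteq> V \<and>
     (\<forall>u\<in>S. \<forall>v\<in>S. \<not> E u v) \<and>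
     (\<forall>v\<in>V - S. \<exists>u\<in>S. E v u)"

definition plane_embedding ::
  "'a set \<Rightarrow> ('a \<Rightarrow> 'a \<Rightarrow> bool) \<Rightarrow> ('a \<Rightarrow> complex) \<Rightarrow> ('a \<Rightarrow> 'a \<Rightarrow> real \<Rightarrow> complex) \<Rightarrow> bool" where
  "plane_embedding V E p \<gamma> \<longleftrightarrow>
     inj_on p V \<and>
     (\<forall>u v. E u v \<longrightarrow> arc (\<gamma> u v) \<and> pathstart (\<gamma> u v) = p u \<and> pathfinish (\<gamma> u v) = p v
                     \<and> \<gamma> v u = reversepath (\<gamma> u v)
                     \<and> path_image (\<gamma> u v) \<inter> p ` V = {p u, p v}) \<and>
     (\<forall>u v x y. E u v \<longrightarrow> E x y \<longrightarrow> {u, v} \<noteq> {x, y} \<longrightarrow>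
         path_image (\<gamma> u v) \<inter> path_image (\<gamma> x y) \<subseteq> p ` ({u, v} \<inter> {x, y}))"

definition drawing :: "'a set \<Rightarrow> ('a \<Rightarrow> 'a \<Rightarrow> bool) \<Rightarrow> ('a \<Rightarrow> complex) \<Rightarrow> ('a \<Rightarrow> 'a \<Rightarrow> real \<Rightarrow> complex) \<Rightarrow> complex set" where
  "drawing V E p \<gamma> = p ` V \<union> \<Union> {path_image (\<gamma> u v) | u v. E u v}"

definition faces :: "'a set \<Rightarrow> ('a \<Rightarrow> 'a \<Rightarrow> bool) \<Rightarrow> ('a \<Rightarrow> complex) \<Rightarrow> ('a \<Rightarrow> 'a \<Rightarrow> real \<Rightarrow> complex) \<Rightarrow> complex set set" where
  "faces V E p \<gamma> = components (- drawing V E p \<gamma>)"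

definition facial_triangle ::
  "'a set \<Rightarrow> ('a \<Rightarrow> 'a \<Rightarrow> bool) \<Rightarrow> ('a \<Rightarrow> complex) \<Rightarrow> ('a \<Rightarrow> 'a \<Rightarrow> real \<Rightarrow> complex) \<Rightarrow> 'a \<Rightarrow> 'a \<Rightarrow> 'a \<Rightarrow> bool" where
  "facial_triangle V E p \<gamma> x u w \<longleftrightarrow>
     x \<noteq> u \<and> u \<noteq> w \<and> w \<noteq> x \<and> E x u \<and> E u w \<and> E w x \<and>
     (\<exists>f \<in> faces V E p \<gamma>.
        frontier f = path_image (\<gamma> x u) \<union> path_image (\<gamma> u w) \<union> path_image (\<gamma> w x))"

definition triangulation_emb ::
  "'a set \<Rightarrow> ('a \<Rightarrow> 'a \<Rightarrow> bool) \<Rightarrow> ('a \<Rightarrow> complex) \<Rightarrow> ('a \<Rightarrow> 'a \<Rightarrow> real \<Rightarrow> complex) \<Rightarrow> bool" where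
  "triangulation_emb V E p \<gamma> \<longleftrightarrow>
     simple_graph V E \<and> plane_embedding V E p \<gamma> \<and>
     (\<forall>f \<in> faces V E p \<gamma>. \<exists>x u w.
        x \<noteq> u \<and> u \<noteq> w \<and> w \<noteq> x \<and> E x u \<and> E u w \<and> E w x \<and>
        frontier f = path_image (\<gamma> x u) \<union> path_image (\<gamma> u w) \<union> path_image (\<gamma> w x))"

definition triangulation :: "'a set \<Rightarrow> ('a \<Rightarrow> 'a \<Rightarrow> bool) \<Rightarrow> bool" where
  "triangulation V E \<longleftrightarrow> (\<exists>p \<gamma>. triangulation_emb V E p \<gamma>)"

text \<open>psi v = None: v uncoloured; psi v = Some i: v has colour i.\<close>

definition partial_proper_4_coloring :: "'a set \<Rightarrow> ('a \<Rightarrow> 'a \<Rightarrow> bool) \<Rightarrow> ('a \<Rightarrow> nat option) \<Rightarrow> bool" where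
  "partial_proper_4_coloring V E \<psi> \<longleftrightarrow>
     (\<forall>v\<in>V. \<forall>i. \<psi> v = Some i \<longrightarrow> i \<in> {1..4}) \<and>
     (\<forall>u v. E u v \<longrightarrow> \<psi> u \<noteq> None \<longrightarrow> \<psi> u \<noteq> \<psi> v)"

text \<open>psi[v]: set of colours used on the closed neighbourhood N[v].\<close>

definition colors_closed_nbhd :: "'a set \<Rightarrow> ('a \<Rightarrow> 'a \<Rightarrow> bool) \<Rightarrow> ('a \<Rightarrow> nat option) \<Rightarrow> 'a \<Rightarrow> nat set" where
  "colors_closed_nbhd V E \<psi> v = {c. \<exists>w\<in>V. (w = v \<or> E v w) \<and> \<psi> w = Some c}"

definition color_class :: "'a set \<Rightarrow> ('a \<Rightarrow> nat option) \<Rightarrow> nat \<Rightarrow> 'a set" where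
  "color_class V \<psi> i = {v\<in>V. \<psi> v = Some i}"

definition U_set :: "'a set \<Rightarrow> ('a \<Rightarrow> 'a \<Rightarrow> bool) \<Rightarrow> ('a \<Rightarrow> nat option) \<Rightarrow> nat \<Rightarrow> 'a set" where
  "U_set V E \<psi> i = {v\<in>V. v \<notin> color_class V \<psi> i \<and> (\<forall>w\<in>color_class V \<psi> i. \<not> E v w)}"

definition bad_edge :: "'a set \<Rightarrow> ('a \<Rightarrow> 'a \<Rightarrow> bool) \<Rightarrow> ('a \<Rightarrow> nat option) \<Rightarrow> 'a \<Rightarrow> 'a \<Rightarrow> bool" where
  "bad_edge V E \<psi> u v \<longleftrightarrow> E u v \<and>
     (\<exists>i\<in>{1..4}. \<exists>j\<in>{1..4}. i \<noteq> j \<and> u \<in> U_set V E \<psi> i \<and> v \<in> U_set V E \<psi> j)"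

text \<open>Edge uw lies on the critical cycle of the uncoloured vertex x, i.e. on the
cycle around x: x is uncoloured and x, u, w bound a face.\<close>

definition on_critical_cycle ::
  "'a set \<Rightarrow> ('a \<Rightarrow> 'a \<Rightarrow> bool) \<Rightarrow> ('a \<Rightarrow> complex) \<Rightarrow> ('a \<Rightarrow> 'a \<Rightarrow> real \<Rightarrow> complex) \<Rightarrow> ('a \<Rightarrow> nat option)
     \<Rightarrow> 'a \<Rightarrow> 'a \<Rightarrow> 'a \<Rightarrow> bool" where
  "on_critical_cycle V E p \<gamma> \<psi> x u w \<longleftrightarrow>
     x \<in> V \<and> \<psi> x = None \<and> facial_triangle V E p \<gamma> x u w"

end

theory Submission
  imports Defs "HOL-Homology.Invariance_of_Domain"
begin

lemma arc_interior_empty: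
  fixes g :: "real \<Rightarrow> complex"
  assumes "arc g"
  shows "interior (path_image g) = {}"
proof (rule ccontr)
  assume "interior (path_image g) \<noteq> {}"
  then obtain x where "x \<in> interior (path_image g)" by blast
  then obtain e where e: "e > 0" "ball x e \<subseteq> path_image g"
    using mem_interior by blast
  obtain h where hm: "homeomorphism {0..1} (path_image g) g h"
    using homeomorphism_arc[OF assms] by blast
  have ch: "continuous_on (ball x e) h"
    using hm e unfolding homeomorphism_def by (meson continuous_on_subset)
  have ih: "inj_on h (ball x e)"
    using hm e unfolding homeomorphism_def by (metis inj_on_def subsetD)
  have "DIM(complex) \<le> DIM(real)"
    using invariance_of_dimension[OF ch _ ih] e by simp
  then show False by simp
qed

lemma closure_Union_finite:
  assumes "finite F"
  shows "closure (\<Union>F) \<subseteq> \<Union>(closure ` F)"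
  using assms by (induction F rule: finite_induct) auto

lemma face_side:
  fixes c :: "real \<Rightarrow> complex"
  assumes sp: "simple_path c" "pathfinish c = pathstart c"
    and conn: "connected f" and ne: "f \<noteq> {}"
    and fr: "frontier f = path_image c" and dis: "f \<inter> path_image c = {}"
  shows "f = inside (path_image c) \<or> f = outside (path_image c)"
proof -
  let ?I = "inside (path_image c)" and ?O = "outside (path_image c)"
  have J: "?I \<noteq> {}" "open ?I" "connected ?I" "?O \<noteq> {}" "open ?O" "connected ?O"
     "?I \<inter> ?O = {}" "?I \<union> ?O = - path_image c"
    using Jordan_inside_outside[OF sp] by auto
  have sub: "f \<subseteq> ?I \<union> ?O" using dis J(8) by blast
  have side: "f \<subseteq> ?I \<or> f \<subseteq> ?O"
    using connectedD[OF conn J(2) J(5)] sub J(7) by blast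
  have IJ: "?I \<inter> path_image c = {}" "?O \<inter> path_image c = {}"
    using J(8) by blast+
  show ?thesis
  proof (cases "f \<subseteq> ?I")
    case True
    have "?I - f = {}"
    proof (rule ccontr)
      assume "?I - f \<noteq> {}"
      then have "?I \<inter> frontier f \<noteq> {}"
        using connected_Int_frontier[OF J(3)] True ne by blast
      then show False using fr IJ by blast
    qed
    then show ?thesis using True by blast
  next
    case False
    then have T: "f \<subseteq> ?O" using side by blast
    have "?O - f = {}"
    proof (rule ccontr)
      assume "?O - f \<noteq> {}"
      then have "?O \<inter> frontier f \<noteq> {}"
        using connected_Int_frontier[OF J(6)] T ne by blast
      then show False using fr IJ by blast
    qed
    then show ?thesis using T by blast
  qed
qed

lemma tri_jordan:
  assumes pe: "plane_embedding V E p \<gamma>" and sg: "simple_graph V E"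
    and e: "E a b" "E b c" "E c a" and d: "a \<noteq> b" "b \<noteq> c" "c \<noteq> a"
  shows "\<exists>g. simple_path g \<and> pathfinish g = pathstart g \<and>
     path_image g = path_image (\<gamma> a b) \<union> path_image (\<gamma> b c) \<union> path_image (\<gamma> c a)"
proof -
  have arc: "\<And>x y. E x y \<Longrightarrow> arc (\<gamma> x y) \<and> pathstart (\<gamma> x y) = p x \<and> pathfinish (\<gamma> x y) = p y"
    using pe unfolding plane_embedding_def by blast
  have dj: "\<And>x y s t. E x y \<Longrightarrow> E s t \<Longrightarrow> {x, y} \<noteq> {s, t} \<Longrightarrow>
         path_image (\<gamma> x y) \<inter> path_image (\<gamma> s t) \<subseteq> p ` ({x, y} \<inter> {s, t})"
    using pe unfolding plane_embedding_def by blast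
  have i1: "path_image (\<gamma> b c) \<inter> path_image (\<gamma> c a) \<subseteq> {p c}"
  proof -
    have "{b, c} \<noteq> {c, a}" using d by (auto simp: doubleton_eq_iff)
    moreover have "{b, c} \<inter> {c, a} = {c}" using d by auto
    ultimately show ?thesis using dj[OF e(2) e(3)] by auto
  qed
  have a2: "arc (\<gamma> b c +++ \<gamma> c a)"
    by (rule arc_join) (use arc e i1 in auto)
  have i2: "path_image (\<gamma> a b) \<inter> path_image (\<gamma> b c) \<subseteq> {p b}"
  proof -
    have "{a, b} \<noteq> {b, c}" using d by (auto simp: doubleton_eq_iff)
    moreover have "{a, b} \<inter> {b, c} = {b}" using d by auto
    ultimately show ?thesis using dj[OF e(1) e(2)] by auto
  qed
  have i3: "path_image (\<gamma> a b) \<inter> path_image (\<gamma> c a) \<subseteq> {p a}"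
  proof -
    have "{a, b} \<noteq> {c, a}" using d by (auto simp: doubleton_eq_iff)
    moreover have "{a, b} \<inter> {c, a} = {a}" using d by auto
    ultimately show ?thesis using dj[OF e(1) e(3)] by auto
  qed
  have pim2: "path_image (\<gamma> b c +++ \<gamma> c a) = path_image (\<gamma> b c) \<union> path_image (\<gamma> c a)"
    by (rule path_image_join) (use arc e in auto)
  have sp: "simple_path (\<gamma> a b +++ (\<gamma> b c +++ \<gamma> c a))"
    by (rule simple_path_join_loop) (use arc e a2 pim2 i2 i3 in auto)
  have pim: "path_image (\<gamma> a b +++ (\<gamma> b c +++ \<gamma> c a)) =
       path_image (\<gamma> a b) \<union> path_image (\<gamma> b c) \<union> path_image (\<gamma> c a)"
    using path_image_join[of "\<gamma> a b" "\<gamma> b c +++ \<gamma> c a"] arc e pim2 by auto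
  show ?thesis
    by (rule exI[of _ "\<gamma> a b +++ (\<gamma> b c +++ \<gamma> c a)"]) (use sp pim arc e in auto)
qed


lemma tri_edge:
  assumes sym: "\<forall>a b. E a b \<longrightarrow> path_image (\<gamma> b a) = path_image (\<gamma> a b)"
    and Es: "\<forall>a b. E a b \<longrightarrow> E b a"
    and e: "E x a" "E a b" "E b x" and d: "x \<noteq> a" "a \<noteq> b" "b \<noteq> x"
    and fr: "frontier f = path_image (\<gamma> x a) \<union> path_image (\<gamma> a b) \<union> path_image (\<gamma> b x)"
    and z: "z \<in> frontier f"
    and zonly: "\<forall>c d. E c d \<and> z \<in> path_image (\<gamma> c d) \<longrightarrow> {c, d} = {u, v}"
  shows "\<exists>w. w \<noteq> u \<and> w \<noteq> v \<and> E u w \<and> E v w \<and> E w u \<and> E w v \<and>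
     frontier f = path_image (\<gamma> w u) \<union> path_image (\<gamma> u v) \<union> path_image (\<gamma> v w)"
proof -
  have s1: "path_image (\<gamma> a x) = path_image (\<gamma> x a)" using sym e by blast
  have s2: "path_image (\<gamma> b a) = path_image (\<gamma> a b)" using sym e by blast
  have s3: "path_image (\<gamma> x b) = path_image (\<gamma> b x)" using sym e by blast
  have E': "E a x" "E b a" "E x b" using Es e by blast+
  from z fr consider "z \<in> path_image (\<gamma> x a)" | "z \<in> path_image (\<gamma> a b)" | "z \<in> path_image (\<gamma> b x)"
    by blast
  then show ?thesis
  proof cases
    case 1
    then have "{x, a} = {u, v}" using zonly e by blast
    then have "(x = u \<and> a = v) \<or> (x = v \<and> a = u)" by (auto simp: doubleton_eq_iff)
    then show ?thesis
      apply (rule disjE)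
      subgoal by (rule exI[of _ b]) (use e E' d fr s1 s2 s3 in auto)
      subgoal by (rule exI[of _ b]) (use e E' d fr s1 s2 s3 in auto)
      done
  next
    case 2
    then have "{a, b} = {u, v}" using zonly e by blast
    then have "(a = u \<and> b = v) \<or> (a = v \<and> b = u)" by (auto simp: doubleton_eq_iff)
    then show ?thesis
      apply (rule disjE)
      subgoal by (rule exI[of _ x]) (use e E' d fr s1 s2 s3 in auto)
      subgoal by (rule exI[of _ x]) (use e E' d fr s1 s2 s3 in auto)
      done
  next
    case 3
    then have "{b, x} = {u, v}" using zonly e by blast
    then have "(b = u \<and> x = v) \<or> (b = v \<and> x = u)" by (auto simp: doubleton_eq_iff)
    then show ?thesis
      apply (rule disjE)
      subgoal by (rule exI[of _ a]) (use e E' d fr s1 s2 s3 in auto)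
      subgoal by (rule exI[of _ a]) (use e E' d fr s1 s2 s3 in auto)
      done
  qed
qed

lemma U_colored:
  assumes col: "partial_proper_4_coloring V E \<psi>"
    and uncol_deg: "\<forall>v\<in>V. \<psi> v = None \<longrightarrow> degree V E v = 4"
    and four: "\<forall>v\<in>V. degree V E v \<le> 5 \<longrightarrow> card (colors_closed_nbhd V E \<psi> v) = 4"
    and U: "x \<in> U_set V E \<psi> i" and i: "i \<in> {1..4}"
  shows "\<psi> x \<noteq> None"
proof
  assume N: "\<psi> x = None"
  have xV: "x \<in> V" using U unfolding U_set_def by blast
  have c4: "card (colors_closed_nbhd V E \<psi> x) = 4" using four uncol_deg N xV by simp
  have sub: "colors_closed_nbhd V E \<psi> x \<subseteq> {1..4}"
    using col unfolding partial_proper_4_coloring_def colors_closed_nbhd_def by blast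
  have "colors_closed_nbhd V E \<psi> x = {1..4}"
    by (rule card_subset_eq) (use sub c4 in auto)
  then have "i \<in> colors_closed_nbhd V E \<psi> x" using i by simp
  then obtain w where "w \<in> V" "w = x \<or> E x w" "\<psi> w = Some i"
    unfolding colors_closed_nbhd_def by blast
  then show False using U N unfolding U_set_def color_class_def by auto
qed

lemma common_uncolored:
  assumes col: "partial_proper_4_coloring V E \<psi>"
    and sg: "simple_graph V E"
    and uncol_deg: "\<forall>v\<in>V. \<psi> v = None \<longrightarrow> degree V E v = 4"
    and four: "\<forall>v\<in>V. degree V E v \<le> 5 \<longrightarrow> card (colors_closed_nbhd V E \<psi> v) = 4"
    and bad: "bad_edge V E \<psi> u v"
    and w: "E u w" "E v w"
  shows "\<psi> w = None"
proof (rule ccontr)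
  assume wc: "\<psi> w \<noteq> None"
  have Es: "\<And>a b. E a b \<Longrightarrow> a \<in> V \<and> b \<in> V \<and> a \<noteq> b \<and> E b a"
    using sg unfolding simple_graph_def by blast
  obtain i j where ij: "i \<in> {1..4}" "j \<in> {1..4}" "i \<noteq> j" "u \<in> U_set V E \<psi> i" "v \<in> U_set V E \<psi> j"
    and uv: "E u v"
    using bad unfolding bad_edge_def by blast
  obtain a where a: "\<psi> u = Some a" using U_colored[OF col uncol_deg four ij(4) ij(1)] by blast
  obtain b where b: "\<psi> v = Some b" using U_colored[OF col uncol_deg four ij(5) ij(2)] by blast
  obtain c where c: "\<psi> w = Some c" using wc by blast
  have V: "u \<in> V" "v \<in> V" "w \<in> V" using Es uv w by blast+
  have rng: "a \<in> {1..4}" "b \<in> {1..4}" "c \<in> {1..4}"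
    using col a b c V unfolding partial_proper_4_coloring_def by blast+
  have ab: "a \<noteq> b" using col uv a b unfolding partial_proper_4_coloring_def by force
  have ac: "a \<noteq> c" using col w a c unfolding partial_proper_4_coloring_def by force
  have bc: "b \<noteq> c" using col w b c unfolding partial_proper_4_coloring_def by force
  have ai: "a \<noteq> i" using ij(4) a unfolding U_set_def color_class_def by auto
  have aj: "a \<noteq> j" using ij(5) a V Es[OF uv] unfolding U_set_def color_class_def by auto
  have bj: "b \<noteq> j" using ij(5) b unfolding U_set_def color_class_def by auto
  have bi: "b \<noteq> i" using ij(4) b V uv unfolding U_set_def color_class_def by auto
  have ci: "c \<noteq> i" using ij(4) c V w unfolding U_set_def color_class_def by auto
  have cj: "c \<noteq> j" using ij(5) c V w unfolding U_set_def color_class_def by auto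
  have h: "\<And>x::nat. x \<in> {1..4} \<Longrightarrow> x = 1 \<or> x = 2 \<or> x = 3 \<or> x = 4" by auto
  show False using h[OF rng(1)] h[OF rng(2)] h[OF rng(3)] h[OF ij(1)] h[OF ij(2)] ij(3) ab ac bc ai aj bj bi ci cj
    by auto
qed


theorem mainTheorem5:
  fixes V :: "'a set" and E :: "'a \<Rightarrow> 'a \<Rightarrow> bool"
    and p :: "'a \<Rightarrow> complex" and \<gamma> :: "'a \<Rightarrow> 'a \<Rightarrow> real \<Rightarrow> complex"
    and \<psi> :: "'a \<Rightarrow> nat option"
  assumes tri: "triangulation_emb V E p \<gamma>"
    and counterex: "\<not> (\<exists>S. independent_dominating_set V E S \<and> 3 * card S \<le> card V)"
    and smallest: "\<forall>(V' :: 'a set) E'. triangulation V' E' \<and> card V' < card V \<longrightarrow>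
                     (\<exists>S. independent_dominating_set V' E' S \<and> 3 * card S \<le> card V')"
    and col: "partial_proper_4_coloring V E \<psi>"
    and uncol_deg: "\<forall>v\<in>V. \<psi> v = None \<longrightarrow> degree V E v = 4"
    and three: "\<forall>v\<in>V. card (colors_closed_nbhd V E \<psi> v) \<ge> 3"
    and four: "\<forall>v\<in>V. degree V E v \<le> 5 \<longrightarrow> card (colors_closed_nbhd V E \<psi> v) = 4"
    and bad: "bad_edge V E \<psi> u v"
  shows "\<exists>x y. x \<noteq> y \<and> on_critical_cycle V E p \<gamma> \<psi> x u v \<and> on_critical_cycle V E p \<gamma> \<psi> y u v"
proof -
  define D where "D = drawing V E p \<gamma>"
  define F where "F = faces V E p \<gamma>"
  define PI where "PI = (\<lambda>a b. path_image (\<gamma> a b))"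
  have sg: "simple_graph V E" and pe: "plane_embedding V E p \<gamma>"
    and trif: "\<forall>f \<in> F. \<exists>x a b. x \<noteq> a \<and> a \<noteq> b \<and> b \<noteq> x \<and> E x a \<and> E a b \<and> E b x \<and>
        frontier f = PI x a \<union> PI a b \<union> PI b x"
    using tri unfolding triangulation_emb_def F_def PI_def by blast+
  have finV: "finite V" using sg unfolding simple_graph_def by blast
  have Es: "\<And>a b. E a b \<Longrightarrow> a \<in> V \<and> b \<in> V \<and> a \<noteq> b \<and> E b a"
    using sg unfolding simple_graph_def by blast
  have arcs: "\<And>a b. E a b \<Longrightarrow> arc (\<gamma> a b) \<and> pathstart (\<gamma> a b) = p a \<and> pathfinish (\<gamma> a b) = p b
        \<and> \<gamma> b a = reversepath (\<gamma> a b) \<and> PI a b \<inter> p ` V = {p a, p b}"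
    using pe unfolding plane_embedding_def PI_def by blast
  have injp: "inj_on p V" using pe unfolding plane_embedding_def by blast
  have dj: "\<And>x y s t. E x y \<Longrightarrow> E s t \<Longrightarrow> {x, y} \<noteq> {s, t} \<Longrightarrow>
         PI x y \<inter> PI s t \<subseteq> p ` ({x, y} \<inter> {s, t})"
    using pe unfolding plane_embedding_def PI_def by blast
  have symPI: "\<forall>a b. E a b \<longrightarrow> path_image (\<gamma> b a) = path_image (\<gamma> a b)"
    using arcs by (simp add: path_image_reversepath)
  have EsA: "\<forall>a b. E a b \<longrightarrow> E b a" using Es by blast
  have Ddef: "D = p ` V \<union> \<Union> {PI a b | a b. E a b}"
    unfolding D_def drawing_def PI_def by simp
  have Fdef: "F = components (- D)" unfolding F_def faces_def D_def by simp
  have finE: "finite {(a, b). E a b}"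
    by (rule finite_subset[of _ "V \<times> V"]) (use Es finV in auto)
  have uv: "E u v" using bad unfolding bad_edge_def by blast
  have uvV: "u \<in> V" "v \<in> V" "u \<noteq> v" using Es[OF uv] by auto
  have closedD: "closed D"
  proof -
    have "{PI a b | a b. E a b} = (\<lambda>(a, b). PI a b) ` {(a, b). E a b}" by auto
    then have fin: "finite {PI a b | a b. E a b}" using finE by simp
    have "\<forall>S \<in> {PI a b | a b. E a b}. closed S"
      using arcs by (auto simp: PI_def intro!: closed_path_image arc_imp_path)
    then have "closed (\<Union> {PI a b | a b. E a b})" using fin by (intro closed_Union) auto
    moreover have "closed (p ` V)" using finV by (simp add: finite_imp_closed)
    ultimately show ?thesis unfolding Ddef by blast
  qed
  have Fopen: "\<And>f. f \<in> F \<Longrightarrow> open f"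
    using closedD Fdef open_components by (metis open_Compl)
  have Fsub: "\<And>f. f \<in> F \<Longrightarrow> f \<subseteq> - D" using Fdef in_components_subset by blast
  have Fconn: "\<And>f. f \<in> F \<Longrightarrow> connected f" using Fdef in_components_connected by blast
  have Fne: "\<And>f. f \<in> F \<Longrightarrow> f \<noteq> {}" using Fdef in_components_nonempty by blast
  have PIsubD: "\<And>a b. E a b \<Longrightarrow> PI a b \<subseteq> D" unfolding Ddef by blast
  have jor: "\<And>a b c. E a b \<Longrightarrow> E b c \<Longrightarrow> E c a \<Longrightarrow> a \<noteq> b \<Longrightarrow> b \<noteq> c \<Longrightarrow> c \<noteq> a \<Longrightarrow>
      \<exists>g. simple_path g \<and> pathfinish g = pathstart g \<and> path_image g = PI a b \<union> PI b c \<union> PI c a"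
    unfolding PI_def using tri_jordan[OF pe sg] by blast
  have side: "\<And>f a b c. f \<in> F \<Longrightarrow> E a b \<Longrightarrow> E b c \<Longrightarrow> E c a \<Longrightarrow> a \<noteq> b \<Longrightarrow> b \<noteq> c \<Longrightarrow> c \<noteq> a \<Longrightarrow>
      frontier f = PI a b \<union> PI b c \<union> PI c a \<Longrightarrow>
      f = inside (PI a b \<union> PI b c \<union> PI c a) \<or> f = outside (PI a b \<union> PI b c \<union> PI c a)"
  proof -
    fix f a b c assume h: "f \<in> F" "E a b" "E b c" "E c a" "a \<noteq> b" "b \<noteq> c" "c \<noteq> a"
      "frontier f = PI a b \<union> PI b c \<union> PI c a"
    obtain g where g: "simple_path g" "pathfinish g = pathstart g" "path_image g = PI a b \<union> PI b c \<union> PI c a"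
      using jor[OF h(2-7)] by blast
    have "f \<inter> path_image g = {}" using Fsub[OF h(1)] PIsubD h(2-4) g(3) by blast
    then show "f = inside (PI a b \<union> PI b c \<union> PI c a) \<or> f = outside (PI a b \<union> PI b c \<union> PI c a)"
      using face_side[OF g(1,2) Fconn[OF h(1)] Fne[OF h(1)]] h(8) g(3) by metis
  qed
  have finF: "finite F"
  proof -
    let ?T = "\<lambda>(a, b, c). {inside (PI a b \<union> PI b c \<union> PI c a), outside (PI a b \<union> PI b c \<union> PI c a)}"
    have "F \<subseteq> \<Union> (?T ` (V \<times> V \<times> V))"
    proof
      fix f assume f: "f \<in> F"
      then obtain x a b where t: "x \<noteq> a" "a \<noteq> b" "b \<noteq> x" "E x a" "E a b" "E b x"
        "frontier f = PI x a \<union> PI a b \<union> PI b x" using trif by blast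
      have "f \<in> ?T (x, a, b)" using side[OF f t(4,5,6,1,2,3,7)] by auto
      moreover have "(x, a, b) \<in> V \<times> V \<times> V" using Es t by auto
      ultimately show "f \<in> \<Union> (?T ` (V \<times> V \<times> V))" by blast
    qed
    moreover have "finite (\<Union> (?T ` (V \<times> V \<times> V)))" using finV by auto
    ultimately show ?thesis by (rule finite_subset)
  qed
  define z where "z = \<gamma> u v (1/2)"
  have zPI: "z \<in> PI u v" unfolding z_def PI_def path_image_def by auto
  have zne: "z \<noteq> p u" "z \<noteq> p v"
  proof -
    have inj: "inj_on (\<gamma> u v) {0..1}" using arcs[OF uv] arc_imp_inj_on by blast
    have "\<gamma> u v 0 = p u" "\<gamma> u v 1 = p v" using arcs[OF uv] unfolding pathstart_def pathfinish_def by auto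
    moreover have "\<gamma> u v (1/2) \<noteq> \<gamma> u v 0" "\<gamma> u v (1/2) \<noteq> \<gamma> u v 1"
      using inj_onD[OF inj, of "1/2" 0] inj_onD[OF inj, of "1/2" 1] by auto
    ultimately show "z \<noteq> p u" "z \<noteq> p v" unfolding z_def by auto
  qed
  have znotV: "z \<notin> p ` V" using arcs[OF uv] zPI zne by blast
  have zonly: "\<forall>c d. E c d \<and> z \<in> PI c d \<longrightarrow> {c, d} = {u, v}"
  proof (intro allI impI)
    fix c d assume cd: "E c d \<and> z \<in> PI c d"
    show "{c, d} = {u, v}"
    proof (rule ccontr)
      assume "{c, d} \<noteq> {u, v}"
      then have "z \<in> p ` ({c, d} \<inter> {u, v})" using dj[of c d u v] cd uv zPI by blast
      then show False using znotV uvV by blast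
    qed
  qed
  have zonly': "\<forall>c d. E c d \<and> z \<in> path_image (\<gamma> c d) \<longrightarrow> {c, d} = {u, v}"
    using zonly unfolding PI_def .
  obtain r where r: "r > 0" "ball z r \<inter> D \<subseteq> PI u v"
  proof -
    define K where "K = p ` V \<union> \<Union> {PI a b | a b. E a b \<and> {a, b} \<noteq> {u, v}}"
    have "{PI a b | a b. E a b \<and> {a, b} \<noteq> {u, v}} \<subseteq> (\<lambda>(a, b). PI a b) ` {(a, b). E a b}" by auto
    then have fin: "finite {PI a b | a b. E a b \<and> {a, b} \<noteq> {u, v}}"
      by (rule finite_subset[OF _ finite_imageI[OF finE]])
    have "\<forall>S \<in> {PI a b | a b. E a b \<and> {a, b} \<noteq> {u, v}}. closed S"
      using arcs by (auto simp: PI_def intro!: closed_path_image arc_imp_path)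
    then have "closed (\<Union> {PI a b | a b. E a b \<and> {a, b} \<noteq> {u, v}})" using fin by (intro closed_Union) auto
    moreover have "closed (p ` V)" using finV by (simp add: finite_imp_closed)
    ultimately have cK: "closed K" unfolding K_def by blast
    have zK: "z \<notin> K"
    proof
      assume "z \<in> K"
      then obtain a b where "E a b" "{a, b} \<noteq> {u, v}" "z \<in> PI a b"
        unfolding K_def using znotV by blast
      then show False using zonly by blast
    qed
    have oK: "open (- K)" using cK by (simp add: open_Compl)
    obtain r where "r > 0" "ball z r \<subseteq> - K"
      using oK zK unfolding open_contains_ball by blast
    moreover have "D \<subseteq> K \<union> PI u v"
    proof
      fix q assume "q \<in> D"
      then consider "q \<in> p ` V" | a b where "E a b" "q \<in> PI a b" unfolding Ddef by blast
      then show "q \<in> K \<union> PI u v"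
      proof cases
        case 1 then show ?thesis unfolding K_def by blast
      next
        case (2 a b)
        show ?thesis
        proof (cases "{a, b} = {u, v}")
          case True
          then have "(a = u \<and> b = v) \<or> (a = v \<and> b = u)" by (auto simp: doubleton_eq_iff)
          then have "PI a b = PI u v" using 2(1) symPI unfolding PI_def by auto
          then show ?thesis using 2(2) by blast
        next
          case False then show ?thesis using 2 unfolding K_def by blast
        qed
      qed
    qed
    ultimately have "ball z r \<inter> D \<subseteq> PI u v" by blast
    then show ?thesis using that \<open>r > 0\<close> by blast
  qed
  have closF: "\<And>G. G \<subseteq> F \<Longrightarrow> closure (\<Union> G) \<subseteq> \<Union> (closure ` G)"
    by (rule closure_Union_finite[OF finite_subset[OF _ finF]])
  have front: "\<And>f. f \<in> F \<Longrightarrow> z \<in> closure f \<Longrightarrow> z \<in> frontier f"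
  proof -
    fix f assume "f \<in> F" "z \<in> closure f"
    moreover have "z \<in> D" using zPI PIsubD uv by blast
    ultimately show "z \<in> frontier f" using Fsub Fopen unfolding frontier_def
      by (metis DiffI ComplD interior_open subsetD)
  qed
  have zclos: "z \<in> closure (- D)"
  proof (rule ccontr)
    assume "z \<notin> closure (- D)"
    then have "z \<in> interior D" by (simp add: closure_complement)
    then obtain s where s: "s > 0" "ball z s \<subseteq> D" using mem_interior by blast
    have "ball z (min r s) \<subseteq> ball z r \<inter> D" using s by auto
    then have "ball z (min r s) \<subseteq> PI u v" using r by blast
    then have "z \<in> interior (PI u v)" using r s by (meson centre_in_ball interior_maximal min_less_iff_conj open_ball subsetD)
    then show False using arc_interior_empty arcs[OF uv] unfolding PI_def by blast
  qed
  obtain f1 where f1: "f1 \<in> F" "z \<in> frontier f1"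
  proof -
    have "- D = \<Union> F" unfolding Fdef by simp
    then have "z \<in> \<Union> (closure ` F)" using zclos closF[of F] by auto
    then show ?thesis using that front by blast
  qed
  obtain w1 where w1: "w1 \<noteq> u" "w1 \<noteq> v" "E u w1" "E v w1" "E w1 u" "E w1 v"
    "frontier f1 = PI w1 u \<union> PI u v \<union> PI v w1"
  proof -
    obtain x a b where t: "x \<noteq> a" "a \<noteq> b" "b \<noteq> x" "E x a" "E a b" "E b x"
      "frontier f1 = PI x a \<union> PI a b \<union> PI b x" using bspec[OF trif f1(1)] by blast
    show ?thesis using tri_edge[OF symPI EsA t(4-6) t(1-3) t(7)[unfolded PI_def] f1(2) zonly'] that
      unfolding PI_def by blast
  qed
  define J where "J = PI w1 u \<union> PI u v \<union> PI v w1"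
  obtain g where g: "simple_path g" "pathfinish g = pathstart g" "path_image g = J"
    using jor[OF w1(5) uv w1(4) w1(1) uvV(3) w1(2)[symmetric]] unfolding J_def by blast
  have JO: "inside J \<noteq> {}" "open (inside J)" "connected (inside J)" "outside J \<noteq> {}" "open (outside J)"
     "inside J \<inter> outside J = {}" "inside J \<union> outside J = - J" "frontier (inside J) = J" "frontier (outside J) = J"
    using Jordan_inside_outside[OF g(1,2)] g(3) by auto
  have f1s: "f1 = inside J \<or> f1 = outside J"
    using side[OF f1(1) w1(5) uv w1(4) w1(1) uvV(3) w1(2)[symmetric]] w1(7) unfolding J_def by blast
  obtain R where R: "R \<inter> f1 = {}" "frontier R = J" "R \<inter> J = {}" "R = inside J \<or> R = outside J"
    "open R"
  proof (cases "f1 = inside J")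
    case True then show ?thesis using that[of "outside J"] JO by blast
  next
    case False then show ?thesis using that[of "inside J"] JO f1s by blast
  qed
  have zJ: "z \<in> J" using zPI unfolding J_def by blast
  have "z \<in> closure R" using R(2) zJ frontier_def by (metis DiffD1)
  then have "z \<in> closure (ball z r \<inter> R)"
    using open_Int_closure_subset[of "ball z r" R] r(1) by auto
  moreover have "ball z r \<inter> R \<subseteq> \<Union> {f \<in> F. f \<inter> R \<noteq> {}}"
  proof
    fix q assume q: "q \<in> ball z r \<inter> R"
    have "q \<notin> D" using q r(2) R(3) unfolding J_def by blast
    then obtain f where "f \<in> F" "q \<in> f" unfolding Fdef using Union_components by blast
    then show "q \<in> \<Union> {f \<in> F. f \<inter> R \<noteq> {}}" using q by blast
  qed
  ultimately have "z \<in> closure (\<Union> {f \<in> F. f \<inter> R \<noteq> {}})" using closure_mono by blast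
  then obtain f2 where f2: "f2 \<in> F" "f2 \<inter> R \<noteq> {}" "z \<in> closure f2"
    using closF[of "{f \<in> F. f \<inter> R \<noteq> {}}"] by blast
  have f2fr: "z \<in> frontier f2" using front f2 by blast
  have f12: "f1 \<noteq> f2" using f2(2) R(1) by blast
  obtain w2 where w2: "w2 \<noteq> u" "w2 \<noteq> v" "E u w2" "E v w2" "E w2 u" "E w2 v"
    "frontier f2 = PI w2 u \<union> PI u v \<union> PI v w2"
  proof -
    obtain x a b where t: "x \<noteq> a" "a \<noteq> b" "b \<noteq> x" "E x a" "E a b" "E b x"
      "frontier f2 = PI x a \<union> PI a b \<union> PI b x" using bspec[OF trif f2(1)] by blast
    show ?thesis using tri_edge[OF symPI EsA t(4-6) t(1-3) t(7)[unfolded PI_def] f2fr zonly'] that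
      unfolding PI_def by blast
  qed
  have w12: "w1 \<noteq> w2"
  proof
    assume eq: "w1 = w2"
    have f2s: "f2 = inside J \<or> f2 = outside J"
      using side[OF f2(1) w1(5) uv w1(4) w1(1) uvV(3) w1(2)[symmetric]] w2(7) eq unfolding J_def by blast
    have "inside J \<union> outside J \<subseteq> - D" using f1s f2s f12 Fsub f1(1) f2(1) by blast
    then have "D \<subseteq> J" using JO(7) by blast
    then have pV: "p ` V \<subseteq> J" unfolding Ddef by blast
    have Vsub: "V \<subseteq> {u, v, w1}"
    proof
      fix t assume t: "t \<in> V"
      then have "p t \<in> J" using pV by blast
      then have "p t \<in> {p w1, p u, p v}" unfolding J_def
        using arcs[OF w1(5)] arcs[OF uv] arcs[OF w1(4)] t by blast
      then show "t \<in> {u, v, w1}" using injp t uvV Es[OF w1(3)] by (auto dest: inj_onD)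
    qed
    have w1V: "w1 \<in> V" using Es[OF w1(3)] by blast
    then have "V = {u, v, w1}" using Vsub uvV by blast
    then have cV: "card V = 3" using uvV(3) w1(1,2) by auto
    have "independent_dominating_set V E {u}"
      unfolding independent_dominating_set_def using uvV Es \<open>V = {u, v, w1}\<close> uv w1(3) by auto
    then show False using counterex cV by auto
  qed
  have c1: "\<psi> w1 = None" using common_uncolored[OF col sg uncol_deg four bad w1(3,4)] .
  have c2: "\<psi> w2 = None" using common_uncolored[OF col sg uncol_deg four bad w2(3,4)] .
  have o1: "on_critical_cycle V E p \<gamma> \<psi> w1 u v"
    unfolding on_critical_cycle_def facial_triangle_def
    using c1 Es[OF w1(3)] w1 uv uvV f1(1) unfolding F_def PI_def by blast
  have o2: "on_critical_cycle V E p \<gamma> \<psi> w2 u v"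
    unfolding on_critical_cycle_def facial_triangle_def
    using c2 Es[OF w2(3)] w2 uv uvV f2(1) unfolding F_def PI_def by blast
  show ?thesis using o1 o2 w12 by blast
qed

end
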